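(* Let $\mathcal{M}=(W,E,V)$ be a coalition model in which $E_w$ satisfies $\alpha$-duality for every $w\in W$. For $w\in W$, $C\subseteq N$, $\varphi\in\mathcal{L}_{CL}$, let $\mathrm{cat}_w(C,\varphi)\in\{\mathrm{FC},\mathrm{PD},\mathrm{AD},\mathrm{FI}\}$ be the unique category $X$ such that $\mathcal{M},w\models X_C(\varphi)$. Let $\sigma_{\mathrm{neg}}$ be the permutation of $\{\mathrm{FC},\mathrm{PD},\mathrm{AD},\mathrm{FI}\}$ fixing $\mathrm{FC},\mathrm{FI}$ and swapping $\mathrm{PD},\mathrm{AD}$; let $\sigma_{\mathrm{comp}}$ fix $\mathrm{PD},\mathrm{AD}$ and swap $\mathrm{FC},\mathrm{FI}$; let $\sigma_{\mathrm{both}}=\sigma_{\mathrm{neg}}\circ\sigma_{\mathrm{comp}}$. Then for all $w,C,\varphi$: $\mathrm{cat}_w(C,\neg\varphi)=\sigma_{\mathrm{neg}}(\mathrm{cat}_w(C,\varphi))$, $\mathrm{cat}_w(N\setminus C,\varphi)=\sigma_{\mathrm{comp}}(\mathrm{cat}_w(C,\varphi))$, and $\mathrm{cat}_w(N\setminus C,\neg\varphi)=\sigma_{\mathrm{both}}(\mathrm{cat}_w(C,\varphi))$. Thus the transformations $(C,\varphi)\mapsto(C,\neg\varphi)$, $(C,\varphi)\mapsto(N\setminus C,\varphi)$, their composite, and the identity induce the permutations $\sigma_{\mathrm{neg}},\sigma_{\mathrm{comp}},\sigma_{\mathrm{both}},\mathrm{id}$ of the four categories, and these four permutations form a group under composition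 isomorphic to the Klein four-group $V_4\cong\mathbb{Z}_2\times\mathbb{Z}_2$.
   Context: Let $N=\{1,\dots,n\}$ be a finite set of agents and $\mathrm{Prop}$ a countable set of atoms. The language $\mathcal{L}_{CL}$ is $\varphi ::= p \mid \neg\varphi \mid (\varphi\wedge\psi)\mid [C]\varphi$ ($p\in\mathrm{Prop}$, $C\subseteq N$). A coalition model is $\mathcal{M}=(W,E,V)$, $W$ nonempty, $E_w(C)\subseteq\mathcal{P}(W)$ for $w\in W$, $C\subseteq N$, $V:\mathrm{Prop}\to\mathcal{P}(W)$; satisfaction is classical for Boolean parts and $\mathcal{M},w\models[C]\varphi$ iff $[\![\varphi]\!]_{\mathcal{M}}=\{u\mid\mathcal{M},u\models\varphi\}\in E_w(C)$. $E_w$ satisfies $\alpha$-duality if for all $C\subseteq N$, $X\subseteq W$: $X\in E_w(C)$ iff $W\setminus X\notin E_w(N\setminus C)$. Categories: $\mathrm{FC}_C(\varphi)=[C]\varphi\wedge[C]\neg\varphi$, $\mathrm{PD}_C(\varphi)=[C]\varphi\wedge\neg[C]\neg\varphi$, $\mathrm{AD}_C(\varphi)=\neg[C]\varphi\wedge[C]\neg\varphi$, $\mathrm{FI}_C(\varphi)=\neg[C]\varphi\wedge\neg[C]\neg\varphi$; exactly one of these holds at each state. *)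

theory Defs
  imports Main "HOL-Algebra.Elementary_Groups"
begin

(* Agents are natural numbers; the set of agents is N = {1..n}. Atoms have type 'p. *)
datatype 'p fm = Atom 'p | Neg "'p fm" | Conj "'p fm" "'p fm" | Coal "nat set" "'p fm"

definition coalition_model :: "nat \<Rightarrow> 'w set \<Rightarrow> ('w \<Rightarrow> nat set \<Rightarrow> 'w set set) \<Rightarrow> ('p \<Rightarrow> 'w set) \<Rightarrow> bool" where
  "coalition_model n W E V \<longleftrightarrow> W \<noteq> {} \<and>
     (\<forall>w\<in>W. \<forall>C. C \<subseteq> {1..n} \<longrightarrow> E w C \<subseteq> Pow W) \<and> (\<forall>p. V p \<subseteq> W)"

fun sat :: "'w set \<Rightarrow> ('w \<Rightarrow> nat set \<Rightarrow> 'w set set) \<Rightarrow> ('p \<Rightarrow> 'w set) \<Rightarrow> 'w \<Rightarrow> 'p fm \<Rightarrow> bool" where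
  "sat W E V w (Atom p) = (w \<in> V p)"
| "sat W E V w (Neg f) = (\<not> sat W E V w f)"
| "sat W E V w (Conj f g) = (sat W E V w f \<and> sat W E V w g)"
| "sat W E V w (Coal C f) = ({u \<in> W. sat W E V u f} \<in> E w C)"

definition alpha_duality :: "nat \<Rightarrow> 'w set \<Rightarrow> ('w \<Rightarrow> nat set \<Rightarrow> 'w set set) \<Rightarrow> 'w \<Rightarrow> bool" where
  "alpha_duality n W E w \<longleftrightarrow>
     (\<forall>C X. C \<subseteq> {1..n} \<longrightarrow> X \<subseteq> W \<longrightarrow> (X \<in> E w C \<longleftrightarrow> W - X \<notin> E w ({1..n} - C)))"

datatype category = FC | PD | AD | FI

fun cat_fm :: "category \<Rightarrow> nat set \<Rightarrow> 'p fm \<Rightarrow> 'p fm" where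
  "cat_fm FC C f = Conj (Coal C f) (Coal C (Neg f))"
| "cat_fm PD C f = Conj (Coal C f) (Neg (Coal C (Neg f)))"
| "cat_fm AD C f = Conj (Neg (Coal C f)) (Coal C (Neg f))"
| "cat_fm FI C f = Conj (Neg (Coal C f)) (Neg (Coal C (Neg f)))"

definition cat :: "'w set \<Rightarrow> ('w \<Rightarrow> nat set \<Rightarrow> 'w set set) \<Rightarrow> ('p \<Rightarrow> 'w set) \<Rightarrow> 'w \<Rightarrow> nat set \<Rightarrow> 'p fm \<Rightarrow> category" where
  "cat W E V w C f = (THE X. sat W E V w (cat_fm X C f))"

fun sigma_neg :: "category \<Rightarrow> category" where
  "sigma_neg FC = FC" | "sigma_neg PD = AD" | "sigma_neg AD = PD" | "sigma_neg FI = FI"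

fun sigma_comp :: "category \<Rightarrow> category" where
  "sigma_comp FC = FI" | "sigma_comp PD = PD" | "sigma_comp AD = AD" | "sigma_comp FI = FC"

definition sigma_both :: "category \<Rightarrow> category" where
  "sigma_both = sigma_neg \<circ> sigma_comp"

definition perm_group :: "(category \<Rightarrow> category) monoid" where
  "perm_group = \<lparr>carrier = {id, sigma_neg, sigma_comp, sigma_both}, monoid.mult = (\<circ>), one = id\<rparr>"

end

theory Submission
  imports Defs
begin

lemma cat_char:
  "cat W E V w C f =
    (if sat W E V w (Coal C f) then (if sat W E V w (Coal C (Neg f)) then FC else PD)
     else (if sat W E V w (Coal C (Neg f)) then AD else FI))"
  unfolding cat_def
  apply (rule the_equality)
   apply (auto split: if_splits)
  apply (case_tac X; auto)+
  done

lemma negset: "{u \<in> W. sat W E V u (Neg f)} = W - {u \<in> W. sat W E V u f}"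
  by auto

lemma negset2: "{u \<in> W. \<not> sat W E V u f} = W - {u \<in> W. sat W E V u f}"
  by auto

lemma negneg: "{u \<in> W. sat W E V u (Neg (Neg f))} = {u \<in> W. sat W E V u f}"
  by auto

lemma compo:
  "sigma_neg \<circ> sigma_neg = id" "sigma_comp \<circ> sigma_comp = id"
  "sigma_neg \<circ> sigma_comp = sigma_both" "sigma_comp \<circ> sigma_neg = sigma_both"
  "sigma_both \<circ> sigma_both = id" "sigma_neg \<circ> sigma_both = sigma_comp"
  "sigma_both \<circ> sigma_neg = sigma_comp" "sigma_comp \<circ> sigma_both = sigma_neg"
  "sigma_both \<circ> sigma_comp = sigma_neg"
  apply -
  apply (rule ext, case_tac x, simp_all add: sigma_both_def)+
  done

lemma ne_at: "f x \<noteq> g x \<Longrightarrow> f \<noteq> g" by auto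
lemma sb: "sigma_both PD = AD" "sigma_both FC = FI" by (simp_all add: sigma_both_def)
lemma distinct_sig[simp]:
  "sigma_neg \<noteq> id" "sigma_comp \<noteq> id" "sigma_both \<noteq> id"
  "sigma_neg \<noteq> sigma_comp" "sigma_neg \<noteq> sigma_both" "sigma_comp \<noteq> sigma_both"
  "id \<noteq> sigma_neg" "id \<noteq> sigma_comp" "id \<noteq> sigma_both"
  "sigma_comp \<noteq> sigma_neg" "sigma_both \<noteq> sigma_neg" "sigma_both \<noteq> sigma_comp"
  apply -
  apply (rule ne_at[where x=PD], simp add: sb)
  apply (rule ne_at[where x=FC], simp add: sb)
  apply (rule ne_at[where x=FC], simp add: sb)
  apply (rule ne_at[where x=FC], simp add: sb)
  apply (rule ne_at[where x=FC], simp add: sb)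
  apply (rule ne_at[where x=PD], simp add: sb)
  apply (rule ne_at[where x=PD], simp add: sb)
  apply (rule ne_at[where x=FC], simp add: sb)
  apply (rule ne_at[where x=FC], simp add: sb)
  apply (rule ne_at[where x=FC], simp add: sb)
  apply (rule ne_at[where x=FC], simp add: sb)
  apply (rule ne_at[where x=PD], simp add: sb)
  done

lemma grp: "group perm_group"
proof (rule groupI)
  fix x y
  assume "x \<in> carrier perm_group" "y \<in> carrier perm_group"
  then have "x \<in> {id, sigma_neg, sigma_comp, sigma_both}" "y \<in> {id, sigma_neg, sigma_comp, sigma_both}"
    by (simp_all add: perm_group_def)
  then show "x \<otimes>\<^bsub>perm_group\<^esub> y \<in> carrier perm_group"
    unfolding perm_group_def by (elim insertE emptyE; simp add: compo)
next
  show "\<one>\<^bsub>perm_group\<^esub> \<in> carrier perm_group" by (simp add: perm_group_def)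
next
  fix x y z
  show "x \<otimes>\<^bsub>perm_group\<^esub> y \<otimes>\<^bsub>perm_group\<^esub> z = x \<otimes>\<^bsub>perm_group\<^esub> (y \<otimes>\<^bsub>perm_group\<^esub> z)"
    by (simp add: perm_group_def comp_assoc)
next
  fix x
  show "\<one>\<^bsub>perm_group\<^esub> \<otimes>\<^bsub>perm_group\<^esub> x = x" by (simp add: perm_group_def)
next
  fix x
  assume "x \<in> carrier perm_group"
  then have "x \<in> {id, sigma_neg, sigma_comp, sigma_both}" by (simp add: perm_group_def)
  then have "x \<circ> x = id" by (elim insertE emptyE; simp add: compo)
  then show "\<exists>y\<in>carrier perm_group. y \<otimes>\<^bsub>perm_group\<^esub> x = \<one>\<^bsub>perm_group\<^esub>"
    using \<open>x \<in> carrier perm_group\<close> by (auto simp: perm_group_def)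
qed

definition hh :: "(category \<Rightarrow> category) \<Rightarrow> int \<times> int" where
  "hh g = (if g PD = AD then 1 else 0, if g FC = FI then 1 else 0)"

lemma hh_vals[simp]: "hh id = (0,0)" "hh sigma_neg = (1,0)" "hh sigma_comp = (0,1)" "hh sigma_both = (1,1)"
  by (simp_all add: hh_def sigma_both_def)

lemma iso: "perm_group \<cong> (integer_mod_group 2 \<times>\<times> integer_mod_group 2)"
proof (rule is_isoI)
  let ?S = "{id, sigma_neg, sigma_comp, sigma_both}"
  have a: "{0..<2} = {0,1::int}" by auto
  have car: "carrier (integer_mod_group 2 \<times>\<times> integer_mod_group 2) = {0,1} \<times> {0,1}"
    by (simp add: DirProd_def carrier_integer_mod_group a)
  have mul: "monoid.mult (integer_mod_group 2 \<times>\<times> integer_mod_group 2) = (\<lambda>(a,b) (c,d). ((a+c) mod 2, (b+d) mod 2))"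
    by (simp add: DirProd_def)
  have f: "hh \<in> ?S \<rightarrow> {0,1} \<times> {0,1}" by auto
  have h: "\<forall>x\<in>?S. \<forall>y\<in>?S. hh (x \<circ> y) = (\<lambda>(a,b) (c,d). ((a+c) mod 2, (b+d) mod (2::int))) (hh x) (hh y)"
    by (auto simp: compo)
  have i: "inj_on hh ?S" by (simp add: inj_on_def)
  have im1: "hh ` ?S = {(0,0),(1,0),(0,1),(1,1)}" by simp
  have im2: "({0,1} \<times> {0,1} :: (int \<times> int) set) = {(0,0),(1,0),(0,1),(1,1)}" by auto
  show "hh \<in> iso perm_group (integer_mod_group 2 \<times>\<times> integer_mod_group 2)"
  proof -
    have cG: "carrier perm_group = ?S" by (simp add: perm_group_def)
    have mG: "monoid.mult perm_group = (\<circ>)" by (simp add: perm_group_def)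
    show ?thesis
      unfolding iso_def hom_def bij_betw_def car mul cG mG
      apply (intro CollectI conjI)
         apply (rule f)
        apply (rule h)
       apply (rule i)
      apply (simp only: im1 im2)
      done
  qed
qed

theorem mainTheorem6:
  fixes n :: nat and W :: "'w set" and E :: "'w \<Rightarrow> nat set \<Rightarrow> 'w set set" and V :: "'p \<Rightarrow> 'w set"
  assumes "coalition_model n W E V"
    and "\<forall>w\<in>W. alpha_duality n W E w"
  shows "(\<forall>w\<in>W. \<forall>C f. C \<subseteq> {1..n} \<longrightarrow>
            cat W E V w C (Neg f) = sigma_neg (cat W E V w C f) \<and>
            cat W E V w ({1..n} - C) f = sigma_comp (cat W E V w C f) \<and>
            cat W E V w ({1..n} - C) (Neg f) = sigma_both (cat W E V w C f) \<and>
            cat W E V w C f = id (cat W E V w C f))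
       \<and> group perm_group
       \<and> perm_group \<cong> (integer_mod_group 2 \<times>\<times> integer_mod_group 2)"
proof (intro conjI ballI allI impI)
  fix w C and f :: "'p fm"
  assume w: "w \<in> W" and C: "C \<subseteq> {1..n}"
  have ad: "alpha_duality n W E w" using assms(2) w by blast
  have CC: "{1..n} - ({1..n} - C) = C" using C by auto
  let ?S = "{u \<in> W. sat W E V u f}"
  have dd: "\<forall>C X. C \<subseteq> {1..n} \<longrightarrow> X \<subseteq> W \<longrightarrow> (X \<in> E w C \<longleftrightarrow> W - X \<notin> E w ({1..n} - C))"
    using ad by (simp only: alpha_duality_def)
  have S: "?S \<subseteq> W" by blast
  have SW: "W - ?S \<subseteq> W" by blast
  have d1: "?S \<in> E w C \<longleftrightarrow> W - ?S \<notin> E w ({1..n} - C)"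
    using dd[rule_format, OF C S] .
  have d2: "W - ?S \<in> E w C \<longleftrightarrow> W - (W - ?S) \<notin> E w ({1..n} - C)"
    using dd[rule_format, OF C SW] .
  have WW: "W - (W - ?S) = ?S" by auto
  define a where "a = (?S \<in> E w C)"
  define b where "b = (W - ?S \<in> E w C)"
  define a' where "a' = (?S \<in> E w ({1..n} - C))"
  define b' where "b' = (W - ?S \<in> E w ({1..n} - C))"
  have e1: "a = (\<not> b')" using d1 unfolding a_def b'_def by blast
  have e2: "b = (\<not> a')" using d2 WW unfolding a'_def b_def by simp
  have c0: "cat W E V w C f = (if a then (if b then FC else PD) else (if b then AD else FI))"
    unfolding a_def b_def by (simp only: cat_char sat.simps negset2)
  have c1: "cat W E V w C (Neg f) = (if b then (if a then FC else PD) else (if a then AD else FI))"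
    unfolding a_def b_def by (simp only: cat_char sat.simps not_not negset2)
  have c2: "cat W E V w ({1..n} - C) f = (if a' then (if b' then FC else PD) else (if b' then AD else FI))"
    unfolding a'_def b'_def by (simp only: cat_char sat.simps negset2)
  have c3: "cat W E V w ({1..n} - C) (Neg f) = (if b' then (if a' then FC else PD) else (if a' then AD else FI))"
    unfolding a'_def b'_def by (simp only: cat_char sat.simps not_not negset2)
  have c0': "cat W E V w C f = (if \<not> b' then (if \<not> a' then FC else PD) else (if \<not> a' then AD else FI))"
    using c0 e1 e2 by simp
  show "cat W E V w C (Neg f) = sigma_neg (cat W E V w C f)"
    unfolding c0 c1 by (cases a; cases b; simp)
  show r2: "cat W E V w ({1..n} - C) f = sigma_comp (cat W E V w C f)"
    unfolding c0' c2 by (cases a'; cases b'; simp)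
  have n2: "cat W E V w ({1..n} - C) (Neg f) = sigma_neg (cat W E V w ({1..n} - C) f)"
    unfolding c2 c3 by (cases a'; cases b'; simp)
  show "cat W E V w ({1..n} - C) (Neg f) = sigma_both (cat W E V w C f)"
    unfolding n2 r2 sigma_both_def comp_apply ..
  show "cat W E V w C f = id (cat W E V w C f)" by simp
next
  show "group perm_group" by (rule grp)
  show "perm_group \<cong> (integer_mod_group 2 \<times>\<times> integer_mod_group 2)" by (rule iso)
qed

end
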